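(* Let $\pi$ be any distribution on $\mathbb{R}^d$ with positive definite covariance matrix $\Sigma$ and precision matrix $Q=\Sigma^{-1}$, partitioned into blocks $Q=(Q_{ij})_{i,j=1}^s$. Then the optimisation problem $$\max_{p\in\Delta_{s-1}}\lambda_{\min}(D_pQ)$$ has a unique solution $p^{\mathrm{opt}}$.
   Context: $\Delta_{s-1}$ is the set of probability vectors $p=(p_1,\dots,p_s)$ with all $p_i>0$. For such $p$, $D_p=\mathrm{diag}(p_1(Q_{11})^{-1},\dots,p_s(Q_{ss})^{-1})$ is the $d\times d$ block-diagonal matrix with diagonal blocks $p_i(Q_{ii})^{-1}$. $\lambda_{\min}$ denotes the smallest eigenvalue (all eigenvalues of $D_pQ$ are real, as $D_pQ$ has the same eigenvalues as the symmetric matrix $\sqrt{Q}D_p\sqrt{Q}$). The quantity $\lambda_{\min}(D_pQ)$ is called the pseudo-spectral gap of RSGS($p$), and its maximiser the pseudo-optimal selection probabilities. *)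

theory Defs
  imports "HOL-Analysis.Analysis"
begin

definition pos_def_matrix :: "real^'n^'n \<Rightarrow> bool" where
  "pos_def_matrix Q \<longleftrightarrow> transpose Q = Q \<and> (\<forall>x. x \<noteq> 0 \<longrightarrow> x \<bullet> (Q *v x) > 0)"

definition open_simplex :: "('k::finite \<Rightarrow> real) set" where
  "open_simplex = {p. (\<forall>i. p i > 0) \<and> sum p UNIV = 1}"

text \<open>Block-diagonal part diag(Q_11,...,Q_ss) of Q w.r.t. the partition of the
  coordinates given by blk (coordinate a lies in block blk a).\<close>
definition block_diag_part :: "('n \<Rightarrow> 'k) \<Rightarrow> real^'n^'n \<Rightarrow> real^'n^'n" where
  "block_diag_part blk Q = (\<chi> a b. if blk a = blk b then Q $ a $ b else 0)"

text \<open>D_p = diag(p_1 Q_11^{-1}, ..., p_s Q_ss^{-1}); the inverse of a block-diagonal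
  matrix is the block-diagonal matrix of the inverses of its blocks.\<close>
definition D_mat :: "('n \<Rightarrow> 'k) \<Rightarrow> real^'n^'n \<Rightarrow> ('k \<Rightarrow> real) \<Rightarrow> real^'n^'n" where
  "D_mat blk Q p = (\<chi> a b. p (blk a) * (matrix_inv (block_diag_part blk Q)) $ a $ b)"

definition real_eigenvalues :: "real^'n^'n \<Rightarrow> real set" where
  "real_eigenvalues A = {c. \<exists>v. v \<noteq> 0 \<and> A *v v = c *\<^sub>R v}"

definition lambda_min :: "real^'n^'n \<Rightarrow> real" where
  "lambda_min A = Min (real_eigenvalues A)"

end

theory Submission
  imports Defs
begin

locale blk_setup =
  fixes Q :: "real^'n^'n" and blk :: "'n \<Rightarrow> 'k::finite"
  assumes pd: "pos_def_matrix Q" and sj: "surj blk"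
begin

definition qf :: "real^'n \<Rightarrow> real" where "qf v = v \<bullet> (Q *v v)"
definition Bm :: "real^'n^'n" where "Bm = block_diag_part blk Q"
definition E :: "('k \<Rightarrow> real) \<Rightarrow> real^'n^'n" where
  "E p = (\<chi> a b. Bm$a$b / p (blk a))"
definition den :: "('k \<Rightarrow> real) \<Rightarrow> real^'n \<Rightarrow> real" where
  "den p v = v \<bullet> (E p *v v)"
definition restr :: "'k \<Rightarrow> real^'n \<Rightarrow> real^'n" where
  "restr i v = (\<chi> a. if blk a = i then v$a else 0)"
definition ai :: "'k \<Rightarrow> real^'n \<Rightarrow> real" where "ai i v = qf (restr i v)"

lemma Qsym: "Q$a$b = Q$b$a"
  using pd unfolding pos_def_matrix_def transpose_def by (metis vec_lambda_beta)

lemma qf_pos: "v \<noteq> 0 \<Longrightarrow> qf v > 0"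
  using pd unfolding pos_def_matrix_def qf_def by auto

lemma qf_nonneg: "qf v \<ge> 0"
  by (cases "v = 0") (auto simp: qf_def dest: qf_pos)

lemma ai_nonneg: "ai i v \<ge> 0" by (simp add: ai_def qf_nonneg)

lemma qf_sum: "qf v = (\<Sum>a\<in>UNIV. \<Sum>b\<in>UNIV. v$a * Q$a$b * v$b)"
  by (simp add: qf_def inner_vec_def matrix_vector_mult_def sum_distrib_left mult.assoc)

lemma den_sum: "den p v = (\<Sum>a\<in>UNIV. \<Sum>b\<in>UNIV. v$a * (if blk a = blk b then Q$a$b / p (blk a) else 0) * v$b)"
  by (simp add: den_def E_def Bm_def block_diag_part_def inner_vec_def matrix_vector_mult_def sum_distrib_left mult.assoc sum_divide_distrib)
     (intro sum.cong refl, auto)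

lemma den_ai: "den p v = (\<Sum>i\<in>UNIV. ai i v / p i)"
proof -
  have "(\<Sum>i\<in>UNIV. ai i v / p i) = (\<Sum>i\<in>UNIV. \<Sum>a\<in>UNIV. \<Sum>b\<in>UNIV.
      (if blk a = i \<and> blk b = i then v$a * Q$a$b * v$b / p i else 0))"
    by (simp add: ai_def qf_sum restr_def sum_divide_distrib if_distrib cong: if_cong)
       (intro sum.cong refl; auto)
  also have "\<dots> = (\<Sum>a\<in>UNIV. \<Sum>b\<in>UNIV. \<Sum>i\<in>UNIV.
      (if blk a = i \<and> blk b = i then v$a * Q$a$b * v$b / p i else 0))"
    by (subst sum.swap, subst (2) sum.swap, rule refl)
  also have "\<dots> = den p v"
    unfolding den_sum
  proof (intro sum.cong refl)
    fix a b
    show "(\<Sum>i\<in>UNIV. (if blk a = i \<and> blk b = i then v$a * Q$a$b * v$b / p i else 0))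
      = v$a * (if blk a = blk b then Q$a$b / p (blk a) else 0) * v$b"
    proof (cases "blk a = blk b")
      case True
      have "(\<Sum>i\<in>UNIV. (if blk a = i \<and> blk b = i then v$a * Q$a$b * v$b / p i else 0))
          = (\<Sum>i\<in>UNIV. (if blk a = i then v$a * Q$a$b * v$b / p i else 0))"
        using True by (intro sum.cong) auto
      then show ?thesis using True by simp
    next
      case False
      then show ?thesis by (simp, intro sum.neutral, auto)
    qed
  qed
  finally show ?thesis by simp
qed

lemma restr_nz: "v$a \<noteq> 0 \<Longrightarrow> restr (blk a) v \<noteq> 0"
  by (auto simp: restr_def vec_eq_iff)

lemma den_pos: assumes "\<forall>i. p i > 0" "v \<noteq> 0" shows "den p v > 0"
proof -
  obtain a where a: "v$a \<noteq> 0" using assms(2) by (auto simp: vec_eq_iff)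
  have "ai (blk a) v > 0" using qf_pos[OF restr_nz[OF a]] by (simp add: ai_def)
  hence t: "ai (blk a) v / p (blk a) > 0" using assms(1) by simp
  have "ai (blk a) v / p (blk a) \<le> (\<Sum>i\<in>UNIV. ai i v / p i)"
    by (rule member_le_sum) (use assms(1) ai_nonneg in \<open>auto intro: divide_nonneg_pos\<close>)
  thus ?thesis using t den_ai by simp
qed

lemma Bm_E1: "Bm = E (\<lambda>_. 1)"
  by (simp add: E_def vec_eq_iff)

lemma Bm_entry: "Bm$a$b = (if blk a = blk b then Q$a$b else 0)"
  by (simp add: Bm_def block_diag_part_def)

lemma Bm_inv: "Bm ** matrix_inv Bm = mat 1 \<and> matrix_inv Bm ** Bm = mat 1"
proof -
  have "\<forall>x. Bm *v x = 0 \<longrightarrow> x = 0"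
  proof (intro allI impI)
    fix x assume h: "Bm *v x = 0"
    show "x = 0"
    proof (rule ccontr)
      assume "x \<noteq> 0"
      hence "den (\<lambda>_. 1) x > 0" by (intro den_pos) auto
      thus False using h by (simp add: den_def Bm_E1[symmetric])
    qed
  qed
  hence "invertible Bm" by (simp add: invertible_left_inverse matrix_left_invertible_ker)
  thus ?thesis unfolding matrix_inv_def invertible_def by (rule someI_ex)
qed

abbreviation Dm where "Dm p \<equiv> D_mat blk Q p"

lemma ED: assumes "\<forall>i. p i > 0" shows "E p ** Dm p = mat 1" "Dm p ** E p = mat 1"
proof -
  have "E p ** Dm p = Bm ** matrix_inv Bm"
  proof (simp add: vec_eq_iff matrix_matrix_mult_def, intro allI sum.cong refl)
    fix a c b
    show "E p $ a $ b * Dm p $ b $ c = Bm $ a $ b * matrix_inv Bm $ b $ c"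
      using assms[rule_format, of "blk b"] by (auto simp: E_def D_mat_def Bm_def[symmetric] Bm_entry)
  qed
  thus "E p ** Dm p = mat 1" using Bm_inv by simp
  thus "Dm p ** E p = mat 1" by (rule matrix_left_right_inverse1)
qed

lemma sym_form: assumes "\<And>a b. A$a$b = A$b$a"
  shows "v \<bullet> ((A::real^'n^'n) *v w) = w \<bullet> (A *v v)"
proof -
  have "v \<bullet> (A *v w) = (\<Sum>a\<in>UNIV. \<Sum>b\<in>UNIV. v$a * A$a$b * w$b)"
    by (simp add: inner_vec_def matrix_vector_mult_def sum_distrib_left mult.assoc)
  also have "\<dots> = (\<Sum>b\<in>UNIV. \<Sum>a\<in>UNIV. w$b * A$b$a * v$a)"
    by (subst sum.swap) (simp add: assms mult_ac)
  also have "\<dots> = w \<bullet> (A *v v)"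
    by (simp add: inner_vec_def matrix_vector_mult_def sum_distrib_left mult.assoc)
  finally show ?thesis .
qed

lemma Esym: "E p $a$b = E p $b$a"
  by (auto simp: E_def Bm_entry Qsym)

lemma Q_form_sym: "v \<bullet> (Q *v w) = w \<bullet> (Q *v v)" by (rule sym_form[OF Qsym])
lemma E_form_sym: "v \<bullet> (E p *v w) = w \<bullet> (E p *v v)" by (rule sym_form[OF Esym])

lemma quad_expand: assumes "\<And>a b. A$a$b = A$b$a"
  shows "(v + t *\<^sub>R w) \<bullet> ((A::real^'n^'n) *v (v + t *\<^sub>R w))
     = v \<bullet> (A *v v) + 2 * t * (w \<bullet> (A *v v)) + t^2 * (w \<bullet> (A *v w))"
  using sym_form[OF assms, of v w]
  by (simp add: matrix_vector_right_distrib matrix_vector_mult_scaleR inner_add_left inner_add_right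
      power2_eq_square algebra_simps)

lemma eig_iff: assumes "\<forall>i. p i > 0"
  shows "((Dm p ** Q) *v v = c *\<^sub>R v) \<longleftrightarrow> (Q *v v = c *\<^sub>R (E p *v v))"
proof
  assume h: "(Dm p ** Q) *v v = c *\<^sub>R v"
  have "Q *v v = (E p ** Dm p ** Q) *v v" using ED(1)[OF assms] by (simp add: matrix_mul_lid)
  also have "\<dots> = E p *v ((Dm p ** Q) *v v)" by (simp add: matrix_vector_mul_assoc matrix_mul_assoc)
  also have "\<dots> = c *\<^sub>R (E p *v v)" by (simp add: h matrix_vector_mult_scaleR)
  finally show "Q *v v = c *\<^sub>R (E p *v v)" .
next
  assume h: "Q *v v = c *\<^sub>R (E p *v v)"
  have "(Dm p ** Q) *v v = Dm p *v (Q *v v)" by (simp add: matrix_vector_mul_assoc)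
  also have "\<dots> = c *\<^sub>R ((Dm p ** E p) *v v)"
    by (simp add: h matrix_vector_mult_scaleR matrix_vector_mul_assoc)
  also have "\<dots> = c *\<^sub>R v" using ED(2)[OF assms] by simp
  finally show "(Dm p ** Q) *v v = c *\<^sub>R v" .
qed

definition rq where "rq p v = qf v / den p v"

lemma eig_rq: assumes "\<forall>i. p i > 0" "c \<in> real_eigenvalues (Dm p ** Q)"
  shows "\<exists>v. v \<noteq> 0 \<and> Q *v v = c *\<^sub>R (E p *v v) \<and> c = rq p v"
proof -
  obtain v where v: "v \<noteq> 0" "(Dm p ** Q) *v v = c *\<^sub>R v"
    using assms(2) by (auto simp: real_eigenvalues_def)
  have e: "Q *v v = c *\<^sub>R (E p *v v)" using v(2) eig_iff[OF assms(1)] by simp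
  have "qf v = c * den p v" by (simp add: qf_def den_def e)
  moreover have "den p v > 0" using den_pos[OF assms(1) v(1)] .
  ultimately have "c = rq p v" by (simp add: rq_def)
  thus ?thesis using v(1) e by blast
qed

lemma eig_finite: assumes "\<forall>i. p i > 0" shows "finite (real_eigenvalues (Dm p ** Q))"
proof (rule ccontr)
  let ?S = "real_eigenvalues (Dm p ** Q)"
  define vec where "vec c = (SOME v. v \<noteq> 0 \<and> Q *v v = c *\<^sub>R (E p *v v))" for c
  have vec: "vec c \<noteq> 0 \<and> Q *v vec c = c *\<^sub>R (E p *v vec c)" if "c \<in> ?S" for c
    unfolding vec_def by (rule someI_ex) (use eig_rq[OF assms that] in blast)
  have orth: "vec c \<bullet> (E p *v vec d) = 0" if "c \<in> ?S" "d \<in> ?S" "c \<noteq> d" for c d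
  proof -
    have "vec c \<bullet> (Q *v vec d) = d * (vec c \<bullet> (E p *v vec d))" using vec[OF that(2)] by simp
    moreover have "vec c \<bullet> (Q *v vec d) = vec d \<bullet> (Q *v vec c)" by (rule Q_form_sym)
    moreover have "vec d \<bullet> (Q *v vec c) = c * (vec d \<bullet> (E p *v vec c))" using vec[OF that(1)] by simp
    moreover have "vec d \<bullet> (E p *v vec c) = vec c \<bullet> (E p *v vec d)" by (rule E_form_sym)
    ultimately have "(c - d) * (vec c \<bullet> (E p *v vec d)) = 0" by (simp add: algebra_simps)
    thus ?thesis using that(3) by simp
  qed
  have inj: "inj_on vec ?S"
  proof (rule inj_onI)
    fix c d assume cd: "c \<in> ?S" "d \<in> ?S" "vec c = vec d"
    show "c = d"
    proof (rule ccontr)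
      assume "c \<noteq> d"
      hence "vec c \<bullet> (E p *v vec c) = 0" using orth[OF cd(1,2)] cd(3) by simp
      moreover have "den p (vec c) > 0" using den_pos[OF assms] vec[OF cd(1)] by simp
      ultimately show False by (simp add: den_def)
    qed
  qed
  have bound: "card B \<le> CARD('n)" if B: "finite B" "B \<subseteq> ?S" for B
  proof -
    have "independent (vec ` B)"
    proof
      assume "dependent (vec ` B)"
      then obtain u where u: "\<exists>v\<in>vec ` B. u v \<noteq> 0" "(\<Sum>v\<in>vec ` B. u v *\<^sub>R v) = 0"
        using dependent_finite[of "vec ` B"] B(1) by auto
      then obtain c where c: "c \<in> B" "u (vec c) \<noteq> 0" by auto
      have "0 = (\<Sum>v\<in>vec ` B. u v *\<^sub>R v) \<bullet> (E p *v vec c)" using u(2) by simp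
      also have "\<dots> = (\<Sum>v\<in>vec ` B. u v * (v \<bullet> (E p *v vec c)))"
        by (simp add: inner_sum_left)
      also have "\<dots> = u (vec c) * (vec c \<bullet> (E p *v vec c))"
      proof -
        have fin: "finite (vec ` B)" using B(1) by simp
        have "(\<Sum>v\<in>vec ` B - {vec c}. u v * (v \<bullet> (E p *v vec c))) = 0"
        proof (rule sum.neutral, rule ballI)
          fix v assume "v \<in> vec ` B - {vec c}"
          then obtain d where "d \<in> B" "v = vec d" "d \<noteq> c" by auto
          thus "u v * (v \<bullet> (E p *v vec c)) = 0" using orth[of d c] B(2) c(1) by auto
        qed
        moreover have "vec c \<in> vec ` B" using c(1) by simp
        ultimately show ?thesis using sum.remove[OF fin, of "vec c" "\<lambda>v. u v * (v \<bullet> (E p *v vec c))"] by simp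
      qed
      finally have "u (vec c) * den p (vec c) = 0" by (simp add: den_def)
      moreover have "den p (vec c) > 0" using den_pos[OF assms] vec c(1) B(2) by auto
      ultimately show False using c(2) by simp
    qed
    hence "card (vec ` B) \<le> DIM(real^'n)" using independent_bound by blast
    moreover have "card (vec ` B) = card B"
      using inj B(2) by (intro card_image) (rule inj_on_subset)
    ultimately show ?thesis by simp
  qed
  assume "infinite ?S"
  then obtain B where "finite B" "card B = Suc CARD('n)" "B \<subseteq> ?S"
    using infinite_arbitrarily_large by blast
  thus False using bound by fastforce
qed

lemma quad_zero: fixes \<alpha> \<beta> :: real
  assumes "\<alpha> \<ge> 0" "\<And>t. 0 \<le> 2*t*\<alpha> + t^2*\<beta>" shows "\<alpha> = 0"
proof (rule ccontr)
  assume "\<alpha> \<noteq> 0" hence a: "\<alpha> > 0" using assms(1) by simp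
  define K where "K = \<bar>\<beta>\<bar> + 1"
  have K: "K > 0" "\<beta> \<le> K - 1" by (auto simp: K_def)
  define t where "t = - \<alpha> / K"
  have "2*t*\<alpha> + t^2*\<beta> = (\<alpha>^2 / K^2) * (\<beta> - 2*K)"
    using K by (simp add: t_def field_simps power2_eq_square)
  also have "\<dots> < 0" using a K by (intro mult_pos_neg) auto
  finally show False using assms(2)[of t] by simp
qed

lemma qf_scale: "qf (c *\<^sub>R v) = c^2 * qf v"
  by (simp add: qf_def matrix_vector_mult_scaleR power2_eq_square)
lemma den_scale: "den p (c *\<^sub>R v) = c^2 * den p v"
  by (simp add: den_def matrix_vector_mult_scaleR power2_eq_square)
lemma rq_scale: "c \<noteq> 0 \<Longrightarrow> rq p (c *\<^sub>R v) = rq p v"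
  by (simp add: rq_def qf_scale den_scale)

lemma rq_cont: assumes "\<forall>i. p i > 0" shows "continuous_on (sphere 0 1) (rq p)"
proof -
  have "continuous_on (sphere 0 1) (\<lambda>v. qf v / den p v)"
    unfolding qf_def den_def
  proof (intro continuous_intros ballI)
    fix v :: "real^'n" assume "v \<in> sphere 0 1"
    hence "v \<noteq> 0" by auto
    thus "v \<bullet> (E p *v v) \<noteq> 0" using den_pos[OF assms] by (simp add: den_def) (metis less_irrefl)
  qed
  thus ?thesis by (simp add: rq_def[abs_def])
qed

lemma F_char: assumes "\<forall>i. p i > 0"
  shows "(\<forall>w. w \<noteq> 0 \<longrightarrow> lambda_min (Dm p ** Q) \<le> rq p w) \<and>
         (\<exists>v. v \<noteq> 0 \<and> rq p v = lambda_min (Dm p ** Q))"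
proof -
  obtain v0 where v0: "v0 \<in> sphere 0 1" "\<And>y. y \<in> sphere 0 1 \<Longrightarrow> rq p v0 \<le> rq p y"
    using continuous_attains_inf[OF compact_sphere _ rq_cont[OF assms]] by force
  have v0nz: "v0 \<noteq> 0" using v0(1) by auto
  define \<mu> where "\<mu> = rq p v0"
  have lb: "\<mu> \<le> rq p w" if "w \<noteq> 0" for w
  proof -
    have "rq p w = rq p ((1 / norm w) *\<^sub>R w)" using that by (simp add: rq_scale)
    also have "\<mu> \<le> \<dots>" unfolding \<mu>_def using that by (intro v0(2)) simp
    finally show ?thesis .
  qed
  have lb2: "\<mu> * den p x \<le> qf x" for x
  proof (cases "x = 0")
    case True thus ?thesis by (simp add: qf_def den_def)
  next
    case False
    have "den p x > 0" using den_pos[OF assms False] .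
    thus ?thesis using lb[OF False] by (simp add: rq_def le_divide_eq)
  qed
  have qv0: "qf v0 = \<mu> * den p v0"
    using den_pos[OF assms v0nz] by (simp add: \<mu>_def rq_def)
  define g where "g = Q *v v0 - \<mu> *\<^sub>R (E p *v v0)"
  have "g \<bullet> g = 0"
  proof (rule quad_zero)
    show "0 \<le> g \<bullet> g" by simp
    fix t
    have "0 \<le> qf (v0 + t *\<^sub>R g) - \<mu> * den p (v0 + t *\<^sub>R g)" using lb2 by simp
    also have "\<dots> = 2*t*(g \<bullet> g) + t^2 * (qf g - \<mu> * den p g)"
      unfolding qf_def den_def quad_expand[OF Qsym] quad_expand[OF Esym]
      using qv0 unfolding qf_def den_def g_def
      by (simp add: algebra_simps inner_diff_left inner_diff_right)
    finally show "0 \<le> 2*t*(g \<bullet> g) + t^2 * (qf g - \<mu> * den p g)" .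
  qed
  hence "g = 0" by simp
  hence "Q *v v0 = \<mu> *\<^sub>R (E p *v v0)" by (simp add: g_def)
  hence mem: "\<mu> \<in> real_eigenvalues (Dm p ** Q)"
    using eig_iff[OF assms] v0nz by (auto simp: real_eigenvalues_def)
  have "lambda_min (Dm p ** Q) = \<mu>"
    unfolding lambda_min_def
  proof (rule Min_eqI[OF eig_finite[OF assms] _ mem])
    fix c assume "c \<in> real_eigenvalues (Dm p ** Q)"
    then obtain v where "v \<noteq> 0" "c = rq p v" using eig_rq[OF assms] by blast
    thus "\<mu> \<le> c" using lb by simp
  qed
  thus ?thesis using lb v0nz unfolding \<mu>_def by auto
qed

definition F where "F p = lambda_min (Dm p ** Q)"

lemma F_lb: "\<forall>i. p i > 0 \<Longrightarrow> w \<noteq> 0 \<Longrightarrow> F p \<le> rq p w"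
  using F_char unfolding F_def by blast
lemma F_att: "\<forall>i. p i > 0 \<Longrightarrow> \<exists>v. v \<noteq> 0 \<and> rq p v = F p"
  using F_char unfolding F_def by blast

lemma rq_pos: "\<forall>i. p i > 0 \<Longrightarrow> v \<noteq> 0 \<Longrightarrow> rq p v > 0"
  using qf_pos den_pos by (simp add: rq_def)

lemma F_pos: "\<forall>i. p i > 0 \<Longrightarrow> F p > 0"
  using F_att rq_pos by metis

lemma F_le: assumes "\<forall>i. p i > 0" shows "F p \<le> p i"
proof -
  obtain a where a: "blk a = i" using sj by (metis surjD)
  define v :: "real^'n" where "v = axis a 1"
  have vnz: "v \<noteq> 0" by (simp add: v_def axis_def vec_eq_iff)
  have r: "restr j v = (if j = i then v else 0)" for j
    by (auto simp: restr_def v_def axis_def vec_eq_iff a)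
  have "ai j v / p j = (if j = i then qf v / p i else 0)" for j
    by (auto simp: ai_def r qf_def)
  hence "den p v = qf v / p i" by (simp add: den_ai)
  hence "rq p v = p i" using qf_pos[OF vnz] assms by (simp add: rq_def)
  thus ?thesis using F_lb[OF assms vnz] by simp
qed

lemma F_scale: assumes "\<forall>i. p i > 0" "\<forall>i. q i > 0" "\<kappa> > 0" "\<forall>i. \<kappa> * p i \<le> q i"
  shows "\<kappa> * F p \<le> F q"
proof -
  obtain v where v: "v \<noteq> 0" "rq q v = F q" using F_att[OF assms(2)] by blast
  have "den q v \<le> den p v / \<kappa>"
    unfolding den_ai sum_divide_distrib
  proof (rule sum_mono)
    fix i
    have "\<kappa> * p i > 0" using assms by simp
    hence "ai i v / q i \<le> ai i v / (\<kappa> * p i)"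
      using assms(2,4) ai_nonneg \<open>\<kappa> * p i > 0\<close> by (intro divide_left_mono) (auto intro: mult_pos_pos)
    thus "ai i v / q i \<le> ai i v / p i / \<kappa>" by (simp add: mult.commute)
  qed
  hence "\<kappa> * rq p v \<le> rq q v"
    using den_pos[OF assms(1) v(1)] den_pos[OF assms(2) v(1)] qf_pos[OF v(1)] assms(3)
    unfolding rq_def by (simp add: field_simps)
  moreover have "\<kappa> * F p \<le> \<kappa> * rq p v" using F_lb[OF assms(1) v(1)] assms(3) by simp
  ultimately show ?thesis using v(2) by simp
qed

lemma F_harm: assumes "\<forall>i. p i > 0" "\<forall>i. q i > 0" "l \<le> F p" "l \<le> F q"
  shows "l \<le> F (\<lambda>i. 2 * p i * q i / (p i + q i))"
proof -
  let ?u = "\<lambda>i. 2 * p i * q i / (p i + q i)"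
  have upos: "\<forall>i. ?u i > 0" using assms(1,2) by (simp add: add_pos_pos)
  obtain v where v: "v \<noteq> 0" "rq ?u v = F ?u" using F_att[OF upos] by blast
  have du: "den ?u v = (den p v + den q v) / 2"
    unfolding den_ai
  proof -
    have "(\<Sum>i\<in>UNIV. ai i v / ?u i) = (\<Sum>i\<in>UNIV. (ai i v / p i + ai i v / q i) / 2)"
    proof (intro sum.cong refl)
      fix i have "p i > 0" "q i > 0" using assms by auto
      thus "ai i v / ?u i = (ai i v / p i + ai i v / q i) / 2" by (simp add: field_simps)
    qed
    thus "(\<Sum>i\<in>UNIV. ai i v / ?u i) = ((\<Sum>i\<in>UNIV. ai i v / p i) + (\<Sum>i\<in>UNIV. ai i v / q i)) / 2"
      by (simp only: sum.distrib sum_divide_distrib[symmetric] add_divide_distrib)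
  qed
  have "l \<le> rq p v" "l \<le> rq q v" using F_lb[OF assms(1) v(1)] F_lb[OF assms(2) v(1)] assms(3,4) by auto
  hence "l * den p v \<le> qf v" "l * den q v \<le> qf v"
    using den_pos[OF assms(1) v(1)] den_pos[OF assms(2) v(1)] by (auto simp: rq_def le_divide_eq)
  hence "l * den ?u v \<le> qf v" unfolding du by (simp add: field_simps)
  hence "l \<le> rq ?u v" using den_pos[OF upos v(1)] by (simp add: rq_def le_divide_eq)
  thus ?thesis using v(2) by simp
qed

lemma F_le1: assumes "p \<in> open_simplex" shows "F p \<le> 1"
proof -
  have pos: "\<forall>i. p i > 0" and sum1: "sum p UNIV = 1" using assms by (auto simp: open_simplex_def)
  obtain i :: 'k where True by simp
  have "p i \<le> sum p UNIV" by (rule member_le_sum) (use pos in \<open>auto intro: less_imp_le\<close>)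
  thus ?thesis using F_le[OF pos, of i] sum1 by simp
qed

lemma F_cont_aux: assumes "\<forall>i. x i > 0" "\<forall>i. y i > 0" "F x \<le> 1" "\<forall>i. y i \<ge> x i - d"
  "\<forall>i. x i \<ge> \<delta>" "d > 0" "\<delta> > 0"
  shows "F x - d / \<delta> \<le> F y"
proof (cases "d / \<delta> < 1")
  case True
  define \<kappa> where "\<kappa> = 1 - d / \<delta>"
  have k: "\<kappa> > 0" using True by (simp add: \<kappa>_def)
  have "\<forall>i. \<kappa> * x i \<le> y i"
  proof
    fix i
    have "d \<le> d * x i / \<delta>" using assms(5,6,7) by (simp add: le_divide_eq mult_left_mono)
    hence "\<kappa> * x i \<le> x i - d" by (simp add: \<kappa>_def algebra_simps)
    thus "\<kappa> * x i \<le> y i" using assms(4) by (meson order_trans)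
  qed
  hence "\<kappa> * F x \<le> F y" using F_scale[OF assms(1,2) k] by simp
  moreover have "F x - d / \<delta> \<le> \<kappa> * F x"
  proof -
    have "d * F x \<le> d" using assms(3,6) by (simp add: mult_left_le)
    hence "d * F x / \<delta> \<le> d / \<delta>" using assms(7) by (simp add: divide_right_mono)
    thus ?thesis by (simp add: \<kappa>_def algebra_simps)
  qed
  ultimately show ?thesis by simp
next
  case False
  thus ?thesis using assms(3) F_pos[OF assms(2)] by simp
qed

lemma exist_max: "\<exists>p. p \<in> open_simplex \<and> (\<forall>q \<in> open_simplex. F q \<le> F p)"
proof -
  define u0 :: "'k \<Rightarrow> real" where "u0 = (\<lambda>i. 1 / real CARD('k))"
  have u0pos: "\<forall>i. u0 i > 0" by (simp add: u0_def)
  have u0s: "u0 \<in> open_simplex" by (simp add: open_simplex_def u0_def)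
  define \<delta> where "\<delta> = F u0"
  have dpos: "\<delta> > 0" using F_pos[OF u0pos] by (simp add: \<delta>_def)
  have dle: "\<delta> \<le> u0 i" for i using F_le[OF u0pos] by (simp add: \<delta>_def)
  define K where "K = {x :: real^'k. (\<forall>i. \<delta> \<le> x$i) \<and> (\<Sum>i\<in>UNIV. x$i) = 1}"
  have Kpos: "x \<in> K \<Longrightarrow> \<forall>i. (\<lambda>i. x$i) i > 0" for x using dpos by (auto simp: K_def intro: less_le_trans)
  have Ksimp: "x \<in> K \<Longrightarrow> (\<lambda>i. x$i) \<in> open_simplex" for x
    using Kpos by (auto simp: K_def open_simplex_def)
  have "closed K" unfolding K_def
    by (intro closed_Collect_conj closed_Collect_all closed_Collect_le closed_Collect_eq continuous_intros)
  moreover have "bounded K"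
  proof (rule bounded_subset[OF bounded_cbox[of 0 "\<chi> i. 1"]])
    show "K \<subseteq> cbox 0 (\<chi> i. 1)"
    proof
      fix x assume x: "x \<in> K"
      have "x$i \<le> 1" for i
      proof -
        have "x$i \<le> (\<Sum>j\<in>UNIV. x$j)"
          by (rule member_le_sum) (use Kpos[OF x] in \<open>auto intro: less_imp_le\<close>)
        thus ?thesis using x by (simp add: K_def)
      qed
      thus "x \<in> cbox 0 (\<chi> i. 1)" using Kpos[OF x] by (auto simp: interval_cart less_imp_le)
    qed
  qed
  ultimately have cK: "compact K" by (simp add: compact_eq_bounded_closed)
  have u0K: "(\<chi> i. u0 i) \<in> K" using dle u0s by (simp add: K_def open_simplex_def)
  have cont: "continuous_on K (\<lambda>x. F (\<lambda>i. x$i))"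
    unfolding continuous_on_iff
  proof (intro ballI allI impI)
    fix x e assume x: "x \<in> K" and e: "(e::real) > 0"
    define d where "d = e * \<delta> / 2"
    have d: "d > 0" using e dpos by (simp add: d_def)
    show "\<exists>d>0. \<forall>y\<in>K. dist y x < d \<longrightarrow> dist (F (\<lambda>i. y$i)) (F (\<lambda>i. x$i)) < e"
    proof (intro exI[of _ d] conjI d ballI impI)
      fix y assume y: "y \<in> K" "dist y x < d"
      have comp: "\<bar>y$i - x$i\<bar> \<le> d" for i
        using component_le_norm_cart[of "y - x" i] y(2) by (simp add: dist_norm)
      have c1: "\<forall>i. y$i \<ge> x$i - d" and c2: "\<forall>i. x$i \<ge> y$i - d"
        using comp by (auto simp: abs_le_iff) (smt (verit) comp abs_le_iff)+
      have dd: "d / \<delta> = e / 2" using dpos by (simp add: d_def)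
      have "F (\<lambda>i. x$i) - d / \<delta> \<le> F (\<lambda>i. y$i)"
        using c1 c2 x y(1) Kpos[OF x] Kpos[OF y(1)] F_le1[OF Ksimp[OF x]] d dpos
        by (intro F_cont_aux) (auto simp: K_def abs_le_iff)
      moreover have "F (\<lambda>i. y$i) - d / \<delta> \<le> F (\<lambda>i. x$i)"
        using c1 c2 x y(1) Kpos[OF x] Kpos[OF y(1)] F_le1[OF Ksimp[OF y(1)]] d dpos
        by (intro F_cont_aux) (auto simp: K_def abs_le_iff)
      ultimately show "dist (F (\<lambda>i. y$i)) (F (\<lambda>i. x$i)) < e"
        using dd e by (simp add: dist_real_def abs_le_iff)
    qed
  qed
  obtain xm where xm: "xm \<in> K" "\<And>y. y \<in> K \<Longrightarrow> F (\<lambda>i. y$i) \<le> F (\<lambda>i. xm$i)"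
    using continuous_attains_sup[OF cK _ cont] u0K by blast
  show ?thesis
  proof (intro exI[of _ "\<lambda>i. xm$i"] conjI ballI)
    show "(\<lambda>i. xm$i) \<in> open_simplex" using Ksimp[OF xm(1)] .
    fix q :: "'k \<Rightarrow> real" assume q: "q \<in> open_simplex"
    have qpos: "\<forall>i. q i > 0" using q by (simp add: open_simplex_def)
    show "F q \<le> F (\<lambda>i. xm$i)"
    proof (cases "\<forall>i. \<delta> \<le> q i")
      case True
      hence "(\<chi> i. q i) \<in> K" using q by (simp add: K_def open_simplex_def)
      from xm(2)[OF this] show ?thesis by simp
    next
      case False
      then obtain i where "q i < \<delta>" by (auto simp: not_le)
      hence "F q < \<delta>" using F_le[OF qpos, of i] by simp
      also have "\<delta> \<le> F (\<lambda>i. xm$i)" using xm(2)[OF u0K] by (simp add: \<delta>_def)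
      finally show ?thesis by simp
    qed
  qed
qed

lemma harm_le: fixes a b :: real assumes "a > 0" "b > 0"
  shows "2*a*b/(a+b) \<le> (a+b)/2" "a \<noteq> b \<Longrightarrow> 2*a*b/(a+b) < (a+b)/2"
proof -
  have "0 \<le> (a-b)^2" by simp
  thus "2*a*b/(a+b) \<le> (a+b)/2" using assms by (simp add: field_simps power2_eq_square)
  assume "a \<noteq> b"
  hence "0 < (a-b)^2" by simp
  thus "2*a*b/(a+b) < (a+b)/2" using assms by (simp add: field_simps power2_eq_square)
qed

lemma main: "\<exists>!p. p \<in> open_simplex \<and> (\<forall>q \<in> open_simplex. F q \<le> F p)"
proof (rule ex_ex1I)
  show "\<exists>p. p \<in> open_simplex \<and> (\<forall>q \<in> open_simplex. F q \<le> F p)" by (rule exist_max)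
next
  fix p q :: "'k \<Rightarrow> real"
  assume hp: "p \<in> open_simplex \<and> (\<forall>q \<in> open_simplex. F q \<le> F p)"
     and hq: "q \<in> open_simplex \<and> (\<forall>r \<in> open_simplex. F r \<le> F q)"
  have ppos: "\<forall>i. p i > 0" and ps: "sum p UNIV = 1" using hp by (auto simp: open_simplex_def)
  have qpos: "\<forall>i. q i > 0" and qs: "sum q UNIV = 1" using hq by (auto simp: open_simplex_def)
  have eq: "F p = F q" using hp hq by (meson order_antisym)
  show "p = q"
  proof (rule ccontr)
    assume ne: "p \<noteq> q"
    then obtain j where j: "p j \<noteq> q j" by auto
    define u where "u = (\<lambda>i. 2 * p i * q i / (p i + q i))"
    have upos: "\<forall>i. u i > 0" using ppos qpos by (simp add: u_def add_pos_pos)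
    have Fu: "F p \<le> F u" using F_harm[OF ppos qpos order_refl] eq by (simp add: u_def)
    define S where "S = sum u UNIV"
    have "S < (\<Sum>i\<in>UNIV. (p i + q i) / 2)"
      unfolding S_def
    proof (rule sum_strict_mono_ex1)
      show "\<forall>i\<in>UNIV. u i \<le> (p i + q i) / 2" using harm_le(1) ppos qpos by (simp add: u_def)
      show "\<exists>i\<in>UNIV. u i < (p i + q i) / 2" using harm_le(2)[OF _ _ j] ppos qpos by (auto simp: u_def)
    qed simp
    also have "\<dots> = 1" using ps qs by (simp add: sum.distrib sum_divide_distrib[symmetric])
    finally have S1: "S < 1" .
    have S0: "S > 0" unfolding S_def using upos by (simp add: sum_pos)
    define p' where "p' = (\<lambda>i. u i / S)"
    have p'pos: "\<forall>i. p' i > 0" using upos S0 by (simp add: p'_def)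
    have p's: "p' \<in> open_simplex" using p'pos S0 by (simp add: open_simplex_def p'_def sum_divide_distrib[symmetric] S_def)
    have "(1/S) * F u \<le> F p'" using F_scale[OF upos p'pos, of "1/S"] S0 by (simp add: p'_def)
    moreover have "F p < (1/S) * F u"
    proof -
      have "F p < F p / S" using F_pos[OF ppos] S0 S1 by (simp add: less_divide_eq)
      also have "\<dots> \<le> F u / S" using Fu S0 by (simp add: divide_right_mono)
      finally show ?thesis by simp
    qed
    ultimately have "F p < F p'" by simp
    moreover have "F p' \<le> F p" using hp p's by blast
    ultimately show False by simp
  qed
qed

end

theorem theorem3:
  fixes Q :: "real^'n^'n" and blk :: "'n \<Rightarrow> 'k::finite"
  assumes "pos_def_matrix Q"
    and "surj blk"
  shows "\<exists>!p. p \<in> open_simplex \<and>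
           (\<forall>q \<in> open_simplex. lambda_min (D_mat blk Q q ** Q) \<le> lambda_min (D_mat blk Q p ** Q))"
proof -
  interpret blk_setup Q blk using assms by unfold_locales
  show ?thesis using main unfolding F_def .
qed

end
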